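(* Fix a monomial order on $S$. If $J$ is an ideal of $S$ and $(E_i)_{i\in\Lambda}$ is a family of monomial ideals of $S$ such that $(J,E_i)$ is a G-nice pair for all $i\in\Lambda$, then $(J,\sum_{i\in\Lambda}E_i)$ is a G-nice pair.
   Context: $K$ is a field and $S=K[x_1,\ldots,x_n]$ with a fixed monomial order. For $0\neq f\in S$, $\mathrm{in}(f)$ denotes its leading monomial; for an ideal $I$, $\mathrm{in}(I)$ is the ideal generated by the leading monomials of the nonzero elements of $I$. A pair $(J,E)$ of ideals of $S$ is called Gröbner nice (G-nice) if $\mathrm{in}(J+E)=\mathrm{in}(J)+\mathrm{in}(E)$. *)

theory Defs
  imports "HOL-Library.Poly_Mapping"
begin

text \<open>Monomials in the variables indexed by the finite type 'n are exponent vectors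
 (functions from n to nat with finite support); polynomials over 'k are finitely supported maps from monomials
 to coefficients, i.e. elements of the polynomial ring S = K[x_i : i in 'n].\<close>

type_synonym ('n, 'k) mpoly = "('n \<Rightarrow>\<^sub>0 nat) \<Rightarrow>\<^sub>0 'k"

definition monomial_order :: "(('n \<Rightarrow>\<^sub>0 nat) \<Rightarrow> ('n \<Rightarrow>\<^sub>0 nat) \<Rightarrow> bool) \<Rightarrow> bool" where
  "monomial_order ord \<longleftrightarrow>
     (\<forall>a. ord a a) \<and>
     (\<forall>a b. ord a b \<and> ord b a \<longrightarrow> a = b) \<and>
     (\<forall>a b c. ord a b \<and> ord b c \<longrightarrow> ord a c) \<and>
     (\<forall>a b. ord a b \<or> ord b a) \<and>
     (\<forall>a b c. ord a b \<longrightarrow> ord (a + c) (b + c)) \<and>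
     wfP (\<lambda>a b. ord a b \<and> a \<noteq> b)"

definition is_ideal :: "'a::comm_ring_1 set \<Rightarrow> bool" where
  "is_ideal I \<longleftrightarrow> 0 \<in> I \<and> (\<forall>x\<in>I. \<forall>y\<in>I. x + y \<in> I) \<and> (\<forall>r. \<forall>x\<in>I. r * x \<in> I)"

definition ideal_gen :: "'a::comm_ring_1 set \<Rightarrow> 'a set" where
  "ideal_gen G = \<Inter> {I. is_ideal I \<and> G \<subseteq> I}"

definition monom :: "('n \<Rightarrow>\<^sub>0 nat) \<Rightarrow> ('n, 'k::zero_neq_one) mpoly" where
  "monom t = Poly_Mapping.single t 1"

definition lead_exp :: "(('n \<Rightarrow>\<^sub>0 nat) \<Rightarrow> ('n \<Rightarrow>\<^sub>0 nat) \<Rightarrow> bool) \<Rightarrow> ('n, 'k::zero) mpoly \<Rightarrow> ('n \<Rightarrow>\<^sub>0 nat)" where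
  "lead_exp ord f = (THE t. t \<in> Poly_Mapping.keys f \<and> (\<forall>s\<in>Poly_Mapping.keys f. ord s t))"

definition init :: "(('n \<Rightarrow>\<^sub>0 nat) \<Rightarrow> ('n \<Rightarrow>\<^sub>0 nat) \<Rightarrow> bool) \<Rightarrow> ('n, 'k::zero_neq_one) mpoly \<Rightarrow> ('n, 'k) mpoly" where
  "init ord f = monom (lead_exp ord f)"

definition init_ideal :: "(('n \<Rightarrow>\<^sub>0 nat) \<Rightarrow> ('n \<Rightarrow>\<^sub>0 nat) \<Rightarrow> bool) \<Rightarrow> ('n, 'k::comm_ring_1) mpoly set \<Rightarrow> ('n, 'k) mpoly set" where
  "init_ideal ord I = ideal_gen {init ord f | f. f \<in> I \<and> f \<noteq> 0}"

definition ideal_sum :: "'a::comm_ring_1 set \<Rightarrow> 'a set \<Rightarrow> 'a set" where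
  "ideal_sum I J = ideal_gen (I \<union> J)"

definition ideal_Sum :: "'i set \<Rightarrow> ('i \<Rightarrow> 'a::comm_ring_1 set) \<Rightarrow> 'a set" where
  "ideal_Sum \<Lambda> E = ideal_gen (\<Union>i\<in>\<Lambda>. E i)"

definition monomial_ideal :: "('n, 'k::comm_ring_1) mpoly set \<Rightarrow> bool" where
  "monomial_ideal E \<longleftrightarrow> (\<exists>M. E = ideal_gen (monom ` M))"

definition G_nice :: "(('n \<Rightarrow>\<^sub>0 nat) \<Rightarrow> ('n \<Rightarrow>\<^sub>0 nat) \<Rightarrow> bool) \<Rightarrow> ('n, 'k::comm_ring_1) mpoly set \<Rightarrow> ('n, 'k) mpoly set \<Rightarrow> bool" where
  "G_nice ord J E \<longleftrightarrow> init_ideal ord (ideal_sum J E) = ideal_sum (init_ideal ord J) (init_ideal ord E)"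

end

theory Submission
  imports Defs
begin


lemma ideal_gen_ideal: "is_ideal (ideal_gen G)"
  unfolding ideal_gen_def is_ideal_def by auto

lemma ideal_gen_sup: "G \<subseteq> ideal_gen G"
  unfolding ideal_gen_def by auto

lemma ideal_gen_least: "is_ideal I \<Longrightarrow> G \<subseteq> I \<Longrightarrow> ideal_gen G \<subseteq> I"
  unfolding ideal_gen_def by auto

lemma ideal_gen_idem: "is_ideal I \<Longrightarrow> ideal_gen I = I"
  by (meson ideal_gen_least ideal_gen_sup subset_antisym subset_refl)

lemma ideal_neg: "is_ideal I \<Longrightarrow> x \<in> I \<Longrightarrow> - x \<in> I"
  unfolding is_ideal_def by (metis mult_minus1)

lemma ideal_diff: "is_ideal I \<Longrightarrow> x \<in> I \<Longrightarrow> y \<in> I \<Longrightarrow> x - y \<in> I"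
  using ideal_neg[of I y] unfolding is_ideal_def by (metis diff_conv_add_uminus)

lemma ideal_add: "is_ideal I \<Longrightarrow> x \<in> I \<Longrightarrow> y \<in> I \<Longrightarrow> x + y \<in> I"
  unfolding is_ideal_def by auto

lemma ideal_mult: "is_ideal I \<Longrightarrow> x \<in> I \<Longrightarrow> r * x \<in> I"
  unfolding is_ideal_def by auto

lemma ideal_zero: "is_ideal I \<Longrightarrow> 0 \<in> I"
  unfolding is_ideal_def by auto

lemma ideal_gen_Un: "ideal_gen (ideal_gen A \<union> ideal_gen B) = ideal_gen (A \<union> B)"
proof
  show "ideal_gen (ideal_gen A \<union> ideal_gen B) \<subseteq> ideal_gen (A \<union> B)"
    by (intro ideal_gen_least ideal_gen_ideal) (meson Un_subset_iff ideal_gen_ideal ideal_gen_least ideal_gen_sup le_supE)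
  show "ideal_gen (A \<union> B) \<subseteq> ideal_gen (ideal_gen A \<union> ideal_gen B)"
    by (intro ideal_gen_least ideal_gen_ideal) (meson Un_mono ideal_gen_sup subset_trans)
qed

lemma ideal_sum_set:
  assumes "is_ideal A" "is_ideal B"
  shows "ideal_sum A B = {a + b | a b. a \<in> A \<and> b \<in> B}"
proof
  let ?S = "{a + b | a b. a \<in> A \<and> b \<in> B}"
  have "is_ideal ?S"
    unfolding is_ideal_def
  proof (intro conjI ballI allI)
    show "0 \<in> ?S" using assms by (auto intro!: exI[of _ 0] simp: ideal_zero)
  next
    fix x y assume "x \<in> ?S" "y \<in> ?S"
    then obtain a b a' b' where "x = a + b" "y = a' + b'" "a \<in> A" "b \<in> B" "a' \<in> A" "b' \<in> B" by blast
    moreover have "x + y = (a + a') + (b + b')" using \<open>x = a + b\<close> \<open>y = a' + b'\<close> by (simp add: algebra_simps)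
    ultimately show "x + y \<in> ?S" using assms ideal_add by blast
  next
    fix r x assume "x \<in> ?S"
    then obtain a b where "x = a + b" "a \<in> A" "b \<in> B" by blast
    moreover have "r * x = r * a + r * b" using \<open>x = a + b\<close> by (simp add: algebra_simps)
    ultimately show "r * x \<in> ?S" using assms ideal_mult by blast
  qed
  moreover have "A \<union> B \<subseteq> ?S"
  proof
    fix x assume "x \<in> A \<union> B"
    then show "x \<in> ?S"
    proof
      assume "x \<in> A" moreover have "x = x + 0" by simp
      ultimately show ?thesis using assms ideal_zero by blast
    next
      assume "x \<in> B" moreover have "x = 0 + x" by simp
      ultimately show ?thesis using assms ideal_zero by blast
    qed
  qed
  ultimately show "ideal_sum A B \<subseteq> ?S" unfolding ideal_sum_def by (rule ideal_gen_least)
  show "?S \<subseteq> ideal_sum A B" unfolding ideal_sum_def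
    using ideal_gen_ideal ideal_gen_sup
    by (smt (verit, best) Un_subset_iff ideal_add mem_Collect_eq subset_iff)
qed



abbreviation keys :: "('a \<Rightarrow>\<^sub>0 'b::zero) \<Rightarrow> 'a set" where "keys \<equiv> Poly_Mapping.keys"
abbreviation lookup :: "('a \<Rightarrow>\<^sub>0 'b::zero) \<Rightarrow> 'a \<Rightarrow> 'b" where "lookup \<equiv> Poly_Mapping.lookup"

definition upc :: "('n \<Rightarrow>\<^sub>0 nat) set \<Rightarrow> ('n \<Rightarrow>\<^sub>0 nat) set" where
  "upc M = {t. \<exists>s\<in>M. \<exists>d. t = s + d}"

definition monoset :: "('n \<Rightarrow>\<^sub>0 nat) set \<Rightarrow> ('n, 'k::comm_ring_1) mpoly set" where
  "monoset M = {p. keys p \<subseteq> upc M}"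

lemma upc_mono: "A \<subseteq> upc B \<Longrightarrow> upc A \<subseteq> upc B"
proof
  fix t assume AB: "A \<subseteq> upc B" and "t \<in> upc A"
  then obtain a d where "a \<in> A" "t = a + d" unfolding upc_def by blast
  then obtain s d' where "s \<in> B" "a = s + d'" using AB unfolding upc_def by blast
  then have "t = s + (d' + d)" using \<open>t = a + d\<close> by (simp add: add.assoc)
  then show "t \<in> upc B" using \<open>s \<in> B\<close> unfolding upc_def by blast
qed

lemma upc_sup: "A \<subseteq> upc A"
  unfolding upc_def by (metis (mono_tags, lifting) add_0_right mem_Collect_eq subsetI)

lemma upc_Un: "upc (A \<union> B) = upc A \<union> upc B"
  unfolding upc_def by auto

lemma monoset_ideal: "is_ideal (monoset M)"
  unfolding is_ideal_def monoset_def
proof (intro conjI ballI allI)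
  show "0 \<in> {p. keys p \<subseteq> upc M}" by simp
next
  fix x y :: "('a, 'b) mpoly" assume "x \<in> {p. keys p \<subseteq> upc M}" "y \<in> {p. keys p \<subseteq> upc M}"
  then show "x + y \<in> {p. keys p \<subseteq> upc M}" using keys_add[of x y] by auto
next
  fix r x :: "('a, 'b) mpoly" assume x: "x \<in> {p. keys p \<subseteq> upc M}"
  have "keys (r * x) \<subseteq> upc M"
  proof
    fix t assume "t \<in> keys (r * x)"
    then obtain a b where "t = a + b" "b \<in> keys x" using keys_mult[of r x] by blast
    then obtain s d where "s \<in> M" "b = s + d" using x unfolding upc_def by blast
    then show "t \<in> upc M" unfolding upc_def using \<open>t = a + b\<close>
      by (auto intro!: bexI[of _ s] exI[of _ "a + d"] simp: algebra_simps)
  qed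
  then show "r * x \<in> {p. keys p \<subseteq> upc M}" by simp
qed

lemma single_in_ideal:
  assumes "is_ideal I" "monom ` M \<subseteq> I" "t \<in> upc M"
  shows "Poly_Mapping.single t c \<in> I"
proof -
  obtain s d where "s \<in> M" "t = s + d" using assms(3) unfolding upc_def by blast
  have "Poly_Mapping.single t c = Poly_Mapping.single d c * monom s"
    unfolding monom_def by (simp add: mult_single \<open>t = s + d\<close> add.commute)
  then show ?thesis using assms \<open>s \<in> M\<close> ideal_mult by fastforce
qed

lemma monoset_sub:
  fixes p :: "('n, 'k::comm_ring_1) mpoly"
  assumes "is_ideal I" "monom ` M \<subseteq> I"
  shows "keys p \<subseteq> upc M \<Longrightarrow> p \<in> I"
proof (induction "card (keys p)" arbitrary: p)
  case 0
  then have "p = 0" by simp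
  then show ?case using assms ideal_zero by blast
next
  case (Suc n)
  then have "keys p \<noteq> {}" by (metis card.empty nat.distinct(1))
  then obtain t where t: "t \<in> keys p" by blast
  define q where "q = p - Poly_Mapping.single t (lookup p t)"
  have kq: "keys q = keys p - {t}"
    unfolding q_def by (auto simp: in_keys_iff lookup_minus lookup_single when_def split: if_splits)
  have "p = q + Poly_Mapping.single t (lookup p t)" unfolding q_def by simp
  moreover have "q \<in> I" using Suc kq t by (intro Suc(1)) auto
  moreover have "Poly_Mapping.single t (lookup p t) \<in> I"
    using single_in_ideal[OF assms] Suc t by blast
  ultimately show ?case using assms ideal_add by metis
qed

lemma ideal_gen_monom: "ideal_gen (monom ` M :: ('n, 'k::comm_ring_1) mpoly set) = monoset M"
proof
  show "ideal_gen (monom ` M) \<subseteq> monoset M"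
    by (rule ideal_gen_least[OF monoset_ideal]) (auto simp: monoset_def monom_def intro: upc_sup[THEN subsetD])
  show "monoset M \<subseteq> ideal_gen (monom ` M)"
    using monoset_sub[OF ideal_gen_ideal ideal_gen_sup] unfolding monoset_def by blast
qed

lemma monom_in_monoset: "(monom t :: ('n, 'k::comm_ring_1) mpoly) \<in> monoset M \<longleftrightarrow> t \<in> upc M"
  unfolding monoset_def monom_def by simp

lemma monoset_eq: "upc A = upc B \<Longrightarrow> monoset A = monoset B"
  unfolding monoset_def by simp



lemma pm_add_cancel: "(d::'n \<Rightarrow>\<^sub>0 nat) + x = d + y \<Longrightarrow> x = y"
proof (rule poly_mapping_eqI)
  fix k assume "d + x = d + y"
  then have "lookup (d + x) k = lookup (d + y) k" by simp
  then show "lookup x k = lookup y k" by (simp add: lookup_add)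
qed

locale mo =
  fixes ord :: "('n \<Rightarrow>\<^sub>0 nat) \<Rightarrow> ('n \<Rightarrow>\<^sub>0 nat) \<Rightarrow> bool"
  assumes mo: "monomial_order ord"
begin

lemma refl: "ord a a" using mo unfolding monomial_order_def by blast
lemma antisym: "ord a b \<Longrightarrow> ord b a \<Longrightarrow> a = b" using mo unfolding monomial_order_def by blast
lemma trans: "ord a b \<Longrightarrow> ord b c \<Longrightarrow> ord a c" using mo unfolding monomial_order_def by blast
lemma total: "ord a b \<or> ord b a" using mo unfolding monomial_order_def by blast
lemma compat: "ord a b \<Longrightarrow> ord (a + c) (b + c)" using mo unfolding monomial_order_def by blast
lemma wf: "wfP (\<lambda>a b. ord a b \<and> a \<noteq> b)" using mo unfolding monomial_order_def by blast

lemma compat_l: "ord a b \<Longrightarrow> ord (c + a) (c + b)"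
  using compat by (metis add.commute)

lemma strict_compat: "ord a b \<Longrightarrow> a \<noteq> b \<Longrightarrow> ord (c + a) (c + b) \<and> c + a \<noteq> c + b"
  using compat_l pm_add_cancel by blast

lemma finite_max:
  assumes "finite S" "S \<noteq> {}"
  shows "\<exists>m\<in>S. \<forall>s\<in>S. ord s m"
  using assms
proof (induction S rule: finite_ne_induct)
  case (singleton x) then show ?case using refl by auto
next
  case (insert x F)
  then obtain m where "m \<in> F" "\<forall>s\<in>F. ord s m" by blast
  show ?case
  proof (cases "ord x m")
    case True then show ?thesis using \<open>m \<in> F\<close> \<open>\<forall>s\<in>F. ord s m\<close> by auto
  next
    case False then have "ord m x" using total by blast
    then show ?thesis using \<open>\<forall>s\<in>F. ord s m\<close> trans refl by blast
  qed
qed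

definition bnd :: "('n \<Rightarrow>\<^sub>0 nat) \<Rightarrow> ('n, 'k::zero) mpoly \<Rightarrow> bool" where
  "bnd d p \<longleftrightarrow> (\<forall>s\<in>keys p. ord s d)"

definition sbnd :: "('n \<Rightarrow>\<^sub>0 nat) \<Rightarrow> ('n, 'k::zero) mpoly \<Rightarrow> bool" where
  "sbnd d p \<longleftrightarrow> (\<forall>s\<in>keys p. ord s d \<and> s \<noteq> d)"

lemma lead_exp_char:
  assumes "t \<in> keys p" "\<forall>s\<in>keys p. ord s t"
  shows "lead_exp ord p = t"
  unfolding lead_exp_def
  using assms antisym by (intro the_equality) auto

lemma lead_exp:
  fixes p :: "('n, 'k::zero) mpoly"
  assumes "p \<noteq> 0"
  shows "lead_exp ord p \<in> keys p" "bnd (lead_exp ord p) p"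
proof -
  obtain m where "m \<in> keys p" "\<forall>s\<in>keys p. ord s m"
    using finite_max[of "keys p"] assms by auto
  then show "lead_exp ord p \<in> keys p" "bnd (lead_exp ord p) p"
    using lead_exp_char unfolding bnd_def by auto
qed

lemma sbnd_bnd: "sbnd d p \<Longrightarrow> bnd d p" unfolding sbnd_def bnd_def by auto

lemma bnd_trans: "bnd d p \<Longrightarrow> ord d d' \<Longrightarrow> bnd d' p" unfolding bnd_def using trans[of _ d d'] by blast

lemma bnd_lt_sbnd: "bnd d p \<Longrightarrow> ord d d' \<Longrightarrow> d \<noteq> d' \<Longrightarrow> sbnd d' p"
  unfolding bnd_def sbnd_def using trans[of _ d d'] antisym[of d d'] by metis

lemma bnd_zero_sbnd: "bnd d p \<Longrightarrow> lookup p d = 0 \<Longrightarrow> sbnd d p"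
  unfolding bnd_def sbnd_def by (auto simp: in_keys_iff)

lemma sbnd_lead:
  fixes p :: "('n, 'k::zero) mpoly"
  assumes "sbnd d p" "p \<noteq> 0"
  shows "ord (lead_exp ord p) d \<and> lead_exp ord p \<noteq> d"
  using lead_exp[OF assms(2)] assms(1) unfolding sbnd_def by blast

lemma bnd_lead:
  fixes p :: "('n, 'k::zero) mpoly"
  assumes "bnd d p" "lookup p d \<noteq> 0"
  shows "lead_exp ord p = d"
  using assms unfolding bnd_def by (intro lead_exp_char) (simp_all add: in_keys_iff)

lemma bnd_add: "bnd d p \<Longrightarrow> bnd d q \<Longrightarrow> bnd d (p + q)"
  using keys_add[of p q] unfolding bnd_def by auto
lemma sbnd_add: "sbnd d p \<Longrightarrow> sbnd d q \<Longrightarrow> sbnd d (p + q)"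
  using keys_add[of p q] unfolding sbnd_def by auto
lemma bnd_diff: "bnd d p \<Longrightarrow> bnd d q \<Longrightarrow> bnd d (p - q)"
  using keys_diff[of p q] unfolding bnd_def by auto
lemma sbnd_diff: "sbnd d p \<Longrightarrow> sbnd d q \<Longrightarrow> sbnd d (p - q)"
  using keys_diff[of p q] unfolding sbnd_def by auto
lemma bnd_single: "ord t d \<Longrightarrow> bnd d (Poly_Mapping.single t c)"
  unfolding bnd_def by simp

lemma bnd_diff_single:
  assumes "bnd d p" "lookup p d = c"
  shows "sbnd d (p - Poly_Mapping.single d c)"
  using assms unfolding bnd_def sbnd_def
  by (auto simp: in_keys_iff lookup_minus lookup_single when_def split: if_splits)

lemma mult_lead:
  fixes g :: "('n, 'k::field) mpoly"
  assumes "g \<noteq> 0"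
  shows "lookup (Poly_Mapping.single d a * g) (d + lead_exp ord g) = a * lookup g (lead_exp ord g)
    \<and> bnd (d + lead_exp ord g) (Poly_Mapping.single d a * g)"
proof -
  define s where "s = lead_exp ord g"
  define r where "r = g - Poly_Mapping.single s (lookup g s)"
  have sr: "sbnd s r" unfolding r_def s_def using bnd_diff_single lead_exp[OF assms] by blast
  have eq: "Poly_Mapping.single d a * g = Poly_Mapping.single (d + s) (a * lookup g s) + Poly_Mapping.single d a * r"
    unfolding r_def by (simp add: right_diff_distrib mult_single)
  have k: "\<forall>t\<in>keys (Poly_Mapping.single d a * r). ord t (d + s) \<and> t \<noteq> d + s"
  proof
    fix t assume "t \<in> keys (Poly_Mapping.single d a * r)"
    then obtain a' b where "t = a' + b" "a' \<in> keys (Poly_Mapping.single d a)" "b \<in> keys r"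
      using keys_mult[of "Poly_Mapping.single d a" r] by blast
    then have "a' = d" by (simp split: if_splits)
    have "ord b s \<and> b \<noteq> s" using sr \<open>b \<in> keys r\<close> unfolding sbnd_def by blast
    then show "ord t (d + s) \<and> t \<noteq> d + s" using strict_compat[of b s d] \<open>t = a' + b\<close> \<open>a' = d\<close> by simp
  qed
  then have "lookup (Poly_Mapping.single d a * r) (d + s) = 0"
  proof (rule contrapos_pp)
    assume "lookup (Poly_Mapping.single d a * r) (d + s) \<noteq> 0"
    then have "d + s \<in> keys (Poly_Mapping.single d a * r)" by (simp add: in_keys_iff)
    then show "\<not> (\<forall>t\<in>keys (Poly_Mapping.single d a * r). ord t (d + s) \<and> t \<noteq> d + s)" by blast
  qed
  then have "lookup (Poly_Mapping.single d a * g) (d + s) = a * lookup g s"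
    unfolding eq by (simp add: lookup_add)
  moreover have "bnd (d + s) (Poly_Mapping.single d a * g)"
    unfolding eq using k refl unfolding sbnd_def by (intro bnd_add bnd_single sbnd_bnd) (simp_all add: sbnd_def)
  ultimately show ?thesis unfolding s_def by blast
qed

end


context mo begin

definition LT :: "('n, 'k::zero_neq_one) mpoly set \<Rightarrow> ('n \<Rightarrow>\<^sub>0 nat) set" where
  "LT A = {lead_exp ord f | f. f \<in> A \<and> f \<noteq> 0}"

lemma std_rep:
  fixes J :: "('n, 'k::field) mpoly set" and M :: "('n \<Rightarrow>\<^sub>0 nat) set"
  assumes J: "is_ideal J"
  and H: "\<And>j e. j \<in> J \<Longrightarrow> e \<in> monoset M \<Longrightarrow> j + e \<noteq> 0 \<Longrightarrow>
             lead_exp ord (j + e) \<in> upc (LT J) \<union> upc M"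
  shows "j0 \<in> J \<Longrightarrow> e0 \<in> monoset M \<Longrightarrow> bnd \<delta> (j0 + e0) \<Longrightarrow>
         \<exists>j e. j \<in> J \<and> e \<in> monoset M \<and> j0 + e0 = j + e \<and> bnd \<delta> j \<and> bnd \<delta> e"
proof (induction \<delta> arbitrary: j0 e0 rule: wfp_induct_rule[OF wf])
  case (1 \<delta>)
  have E: "is_ideal (monoset M :: ('n, 'k) mpoly set)" by (rule monoset_ideal)
  have R: "\<exists>j e. j \<in> J \<and> e \<in> monoset M \<and> j1 + e1 = j + e \<and> bnd \<delta> j \<and> bnd \<delta> e"
    if "j1 \<in> J" "e1 \<in> monoset M" "sbnd \<delta> (j1 + e1)" for j1 e1
  proof (cases "j1 + e1 = 0")
    case True
    then show ?thesis using J E ideal_zero by (intro exI[of _ 0]) (auto simp: bnd_def)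
  next
    case False
    define t where "t = lead_exp ord (j1 + e1)"
    have t: "ord t \<delta> \<and> t \<noteq> \<delta>" using sbnd_lead[OF that(3) False] t_def by simp
    have "bnd t (j1 + e1)" using lead_exp[OF False] t_def by simp
    moreover have "\<exists>j e. j \<in> J \<and> e \<in> monoset M \<and> j1 + e1 = j + e \<and> bnd t j \<and> bnd t e"
      using 1(1) t that(1,2) \<open>bnd t (j1 + e1)\<close> by blast
    then obtain j e where "j \<in> J" "e \<in> monoset M" "j1 + e1 = j + e" "bnd t j" "bnd t e"
      by blast
    then show ?thesis using t bnd_trans by blast
  qed
  let ?p = "j0 + e0"
  show ?case
  proof (cases "lookup ?p \<delta> = 0")
    case True
    then show ?thesis using R 1 bnd_zero_sbnd by blast
  next
    case False
    define c where "c = lookup ?p \<delta>"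
    have c: "c \<noteq> 0" using False c_def by simp
    have p0: "?p \<noteq> 0" using False by auto
    have lead: "lead_exp ord ?p = \<delta>" using bnd_lead 1 False by blast
    have sb: "sbnd \<delta> (?p - Poly_Mapping.single \<delta> c)" using bnd_diff_single 1 c_def by blast
    have "\<delta> \<in> upc (LT J) \<union> upc M" using H[OF 1(2,3) p0] lead by simp
    then show ?thesis
    proof
      assume "\<delta> \<in> upc M"
      define q :: "('n, 'k) mpoly" where "q = Poly_Mapping.single \<delta> c"
      have q: "q \<in> monoset M" unfolding q_def monoset_def using \<open>\<delta> \<in> upc M\<close> by simp
      have "?p - q = j0 + (e0 - q)" by simp
      moreover have "e0 - q \<in> monoset M" using ideal_diff[OF E 1(3) q] .
      ultimately obtain j e where je: "j \<in> J" "e \<in> monoset M" "?p - q = j + e" "bnd \<delta> j" "bnd \<delta> e"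
        using R[of j0 "e0 - q"] 1 sb q_def by metis
      have "?p = j + (e + q)" using je(3) by (simp add: algebra_simps)
      moreover have "e + q \<in> monoset M" using ideal_add[OF E je(2) q] .
      moreover have "bnd \<delta> (e + q)" unfolding q_def using je(5) refl by (intro bnd_add bnd_single)
      ultimately show ?thesis using je by blast
    next
      assume "\<delta> \<in> upc (LT J)"
      then obtain g d where g: "g \<in> J" "g \<noteq> 0" "\<delta> = lead_exp ord g + d"
        unfolding upc_def LT_def by blast
      define a where "a = c / lookup g (lead_exp ord g)"
      have lg: "lookup g (lead_exp ord g) \<noteq> 0" using lead_exp(1)[OF g(2)] by (simp add: in_keys_iff)
      define q :: "('n, 'k) mpoly" where "q = Poly_Mapping.single d a * g"
      have dd: "\<delta> = d + lead_exp ord g" using g(3) by (simp add: add.commute)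
      have ql: "lookup q \<delta> = c" and qb: "bnd \<delta> q"
        using mult_lead[OF g(2), of d a] lg unfolding q_def a_def dd by auto
      have qJ: "q \<in> J" unfolding q_def using ideal_mult[OF J g(1)] .
      have "sbnd \<delta> (?p - q)"
        using 1(4) qb ql c_def unfolding bnd_def sbnd_def
        by (smt (verit, ccfv_threshold) diff_self in_keys_iff keys_diff lookup_minus subsetD Un_iff)
      moreover have "?p - q = (j0 - q) + e0" by simp
      moreover have "j0 - q \<in> J" using ideal_diff[OF J 1(2) qJ] .
      ultimately obtain j e where je: "j \<in> J" "e \<in> monoset M" "?p - q = j + e" "bnd \<delta> j" "bnd \<delta> e"
        using R[of "j0 - q" e0] 1 by metis
      have "?p = (j + q) + e" using je(3) by (simp add: algebra_simps)
      moreover have "j + q \<in> J" using ideal_add[OF J je(1) qJ] .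
      moreover have "bnd \<delta> (j + q)" using je(4) qb by (rule bnd_add)
      ultimately show ?thesis using je by blast
    qed
  qed
qed

end


context mo begin

lemma exists_bnd:
  fixes a b :: "('n, 'k::zero) mpoly"
  shows "\<exists>d. bnd d a \<and> bnd d b"
proof (cases "keys a \<union> keys b = {}")
  case True then show ?thesis by (auto simp: bnd_def)
next
  case False
  then obtain m where "\<forall>s\<in>keys a \<union> keys b. ord s m" using finite_max[of "keys a \<union> keys b"] by auto
  then show ?thesis unfolding bnd_def by blast
qed

lemma smaller_bnd:
  fixes a b :: "('n, 'k::zero) mpoly"
  assumes "sbnd d a" "sbnd d b" "a \<noteq> 0 \<or> b \<noteq> 0"
  shows "\<exists>d'. ord d' d \<and> d' \<noteq> d \<and> bnd d' a \<and> bnd d' b"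
proof -
  have "keys a \<union> keys b \<noteq> {}" using assms(3) by auto
  then obtain m where m: "m \<in> keys a \<union> keys b" "\<forall>s\<in>keys a \<union> keys b. ord s m"
    using finite_max[of "keys a \<union> keys b"] by auto
  have "ord m d \<and> m \<noteq> d" using m(1) assms(1,2) unfolding sbnd_def by blast
  then show ?thesis using m(2) unfolding bnd_def by blast
qed

lemma monoset_mono: "A \<subseteq> B \<Longrightarrow> monoset A \<subseteq> monoset B"
  unfolding monoset_def upc_def by blast

lemma main_lead:
  fixes J :: "('n, 'k::field) mpoly set" and Mi :: "'i \<Rightarrow> ('n \<Rightarrow>\<^sub>0 nat) set"
  assumes J: "is_ideal J"
  and H: "\<And>i j e. i \<in> \<Lambda> \<Longrightarrow> j \<in> J \<Longrightarrow> e \<in> monoset (Mi i) \<Longrightarrow> j + e \<noteq> 0 \<Longrightarrow>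
             lead_exp ord (j + e) \<in> upc (LT J) \<union> upc (Mi i)"
  and j0: "j0 \<in> J" and e0: "e0 \<in> monoset (\<Union>i\<in>\<Lambda>. Mi i)" and f0: "j0 + e0 \<noteq> 0"
  shows "lead_exp ord (j0 + e0) \<in> upc (LT J) \<union> upc (\<Union>i\<in>\<Lambda>. Mi i)"
proof -
  define M where "M = (\<Union>i\<in>\<Lambda>. Mi i)"
  define f where "f = j0 + e0"
  have EM: "is_ideal (monoset M :: ('n, 'k) mpoly set)" by (rule monoset_ideal)
  define Q where "Q = {\<delta>. \<exists>j e. j \<in> J \<and> e \<in> monoset M \<and> f = j + e \<and> bnd \<delta> j \<and> bnd \<delta> e}"
  obtain d0 where "bnd d0 j0 \<and> bnd d0 e0" using exists_bnd by blast
  then have "d0 \<in> Q" unfolding Q_def f_def M_def using j0 e0 by blast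
  then obtain \<delta> where "\<delta> \<in> Q" and min: "\<And>y. ord y \<delta> \<and> y \<noteq> \<delta> \<Longrightarrow> y \<notin> Q"
    using wf unfolding wfp_eq_minimal by metis
  then obtain j e where je: "j \<in> J" "e \<in> monoset M" "f = j + e" "bnd \<delta> j" "bnd \<delta> e"
    unfolding Q_def by blast
  have f0': "f \<noteq> 0" using f0 f_def by simp
  have noQ: False if A: "j' \<in> J" "e' \<in> monoset M" "f = j' + e'" "sbnd \<delta> j'" "sbnd \<delta> e'" for j' e'
  proof -
    have "j' \<noteq> 0 \<or> e' \<noteq> 0" using f0' A(3) by auto
    then obtain d' where "ord d' \<delta> \<and> d' \<noteq> \<delta>" "bnd d' j'" "bnd d' e'"
      using smaller_bnd A(4,5) by blast
    then have "d' \<in> Q" unfolding Q_def using A by blast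
    then show False using min \<open>ord d' \<delta> \<and> d' \<noteq> \<delta>\<close> by blast
  qed
  have fl: "lookup f \<delta> = lookup j \<delta> + lookup e \<delta>" using je(3) by (simp add: lookup_add)
  show ?thesis
  proof (cases "lookup f \<delta> = 0")
    case False
    have "bnd \<delta> f" using je bnd_add by simp
    then have lf: "lead_exp ord f = \<delta>" using bnd_lead False by blast
    show ?thesis
    proof (cases "lookup j \<delta> = 0")
      case True
      then have "\<delta> \<in> keys e" using False fl by (simp add: in_keys_iff)
      then have "\<delta> \<in> upc M" using je(2) unfolding monoset_def by blast
      then show ?thesis using lf f_def M_def by simp
    next
      case False
      then have "lead_exp ord j = \<delta>" using bnd_lead je(4) by blast
      moreover have "j \<noteq> 0" using False by auto
      ultimately have "\<delta> \<in> LT J" unfolding LT_def using je(1) by blast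
      then show ?thesis using upc_sup lf f_def by blast
    qed
  next
    case True
    show ?thesis
    proof (cases "lookup e \<delta> = 0")
      case True
      then have "lookup j \<delta> = 0" using fl \<open>lookup f \<delta> = 0\<close> by simp
      then have False using noQ[OF je(1,2,3)] bnd_zero_sbnd je(4,5) True by blast
      then show ?thesis ..
    next
      case False
      define c where "c = lookup e \<delta>"
      have "\<delta> \<in> keys e" using False by (simp add: in_keys_iff)
      then have "\<delta> \<in> upc M" using je(2) unfolding monoset_def by blast
      then obtain i where i: "i \<in> \<Lambda>" "\<delta> \<in> upc (Mi i)" unfolding M_def upc_def by blast
      define q :: "('n, 'k) mpoly" where "q = Poly_Mapping.single \<delta> c"
      have qi: "q \<in> monoset (Mi i)" unfolding q_def monoset_def using i(2) by simp
      have qM: "q \<in> monoset M" using qi monoset_mono[of "Mi i" M] i(1) unfolding M_def by blast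
      have sjq: "sbnd \<delta> (j + q)"
      proof -
        have "bnd \<delta> (j + q)" using je(4) refl unfolding q_def by (intro bnd_add bnd_single)
        moreover have "lookup (j + q) \<delta> = 0" using fl True unfolding q_def c_def by (simp add: lookup_add)
        ultimately show ?thesis by (rule bnd_zero_sbnd)
      qed
      have "\<exists>j1 e1. j1 \<in> J \<and> e1 \<in> monoset (Mi i) \<and> j + q = j1 + e1 \<and> sbnd \<delta> j1 \<and> sbnd \<delta> e1"
      proof (cases "j + q = 0")
        case True
        then show ?thesis using ideal_zero[OF J] ideal_zero[OF monoset_ideal]
          by (intro exI[of _ 0]) (auto simp: sbnd_def)
      next
        case False
        define t where "t = lead_exp ord (j + q)"
        have t: "ord t \<delta> \<and> t \<noteq> \<delta>" using sbnd_lead[OF sjq False] t_def by simp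
        have "bnd t (j + q)" using lead_exp[OF False] t_def by simp
        then obtain j1 e1 where "j1 \<in> J" "e1 \<in> monoset (Mi i)" "j + q = j1 + e1" "bnd t j1" "bnd t e1"
          using std_rep[OF J H[OF i(1)] je(1) qi] by blast
        then show ?thesis using t bnd_lt_sbnd by blast
      qed
      then obtain j1 e1 where r: "j1 \<in> J" "e1 \<in> monoset (Mi i)" "j + q = j1 + e1" "sbnd \<delta> j1" "sbnd \<delta> e1"
        by blast
      have e1M: "e1 \<in> monoset M" using r(2) monoset_mono[of "Mi i" M] i(1) unfolding M_def by blast
      have "f = j1 + (e1 + (e - q))" using je(3) r(3) by (simp add: algebra_simps)
      moreover have "e1 + (e - q) \<in> monoset M" using ideal_add[OF EM e1M ideal_diff[OF EM je(2) qM]] .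
      moreover have "sbnd \<delta> (e1 + (e - q))"
        using sbnd_add r(5) bnd_diff_single[OF je(5)] c_def q_def by blast
      ultimately have False using noQ r by blast
      then show ?thesis ..
    qed
  qed
qed

end


lemma ideal_gen_UN: "ideal_gen (\<Union>i\<in>L. ideal_gen (A i)) = ideal_gen (\<Union>i\<in>L. A i)"
proof
  have "ideal_gen (A i) \<subseteq> ideal_gen (\<Union>i\<in>L. A i)" if "i \<in> L" for i
  proof (rule ideal_gen_least[OF ideal_gen_ideal])
    have "A i \<subseteq> (\<Union>i\<in>L. A i)" using that by blast
    then show "A i \<subseteq> ideal_gen (\<Union>i\<in>L. A i)" using ideal_gen_sup by (rule subset_trans)
  qed
  then have "(\<Union>i\<in>L. ideal_gen (A i)) \<subseteq> ideal_gen (\<Union>i\<in>L. A i)" by (rule UN_least)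
  then show "ideal_gen (\<Union>i\<in>L. ideal_gen (A i)) \<subseteq> ideal_gen (\<Union>i\<in>L. A i)"
    by (rule ideal_gen_least[OF ideal_gen_ideal])
  have "(\<Union>i\<in>L. A i) \<subseteq> (\<Union>i\<in>L. ideal_gen (A i))" using ideal_gen_sup by (rule UN_mono[OF subset_refl])
  then have "(\<Union>i\<in>L. A i) \<subseteq> ideal_gen (\<Union>i\<in>L. ideal_gen (A i))" using ideal_gen_sup by (rule subset_trans)
  then show "ideal_gen (\<Union>i\<in>L. A i) \<subseteq> ideal_gen (\<Union>i\<in>L. ideal_gen (A i))"
    by (rule ideal_gen_least[OF ideal_gen_ideal])
qed

context mo begin

lemma init_ideal_monoset:
  "init_ideal ord (A :: ('n, 'k::comm_ring_1) mpoly set) = monoset (LT A)"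
proof -
  have "{init ord f | f. f \<in> A \<and> f \<noteq> 0} = monom ` LT A"
    unfolding init_def LT_def by blast
  then show ?thesis unfolding init_ideal_def by (simp add: ideal_gen_monom)
qed

lemma sum_init:
  "ideal_sum (init_ideal ord A) (init_ideal ord (B :: ('n, 'k::comm_ring_1) mpoly set)) = monoset (LT A \<union> LT B)"
  unfolding ideal_sum_def init_ideal_monoset ideal_gen_monom[symmetric] ideal_gen_Un image_Un ..

lemma LT_mono: "A \<subseteq> B \<Longrightarrow> LT A \<subseteq> LT B"
  unfolding LT_def by blast

lemma LT_monoset: "LT (monoset M :: ('n, 'k::comm_ring_1) mpoly set) \<subseteq> upc M"
proof
  fix t assume "t \<in> LT (monoset M :: ('n, 'k) mpoly set)"
  then obtain f :: "('n, 'k) mpoly" where "f \<in> monoset M" "f \<noteq> 0" "t = lead_exp ord f" unfolding LT_def by blast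
  then show "t \<in> upc M" using lead_exp(1)[of f] unfolding monoset_def by blast
qed

lemma monoset_LT: "M \<subseteq> LT (monoset M :: ('n, 'k::comm_ring_1) mpoly set)"
proof
  fix t assume "t \<in> M"
  have m: "(monom t :: ('n, 'k) mpoly) \<in> monoset M" using \<open>t \<in> M\<close> upc_sup monom_in_monoset by blast
  have "lead_exp ord (monom t :: ('n, 'k) mpoly) = t" unfolding monom_def
    by (rule lead_exp_char) (auto simp: refl)
  moreover have "(monom t :: ('n, 'k) mpoly) \<noteq> 0" unfolding monom_def
  proof
    assume "Poly_Mapping.single t (1::'k) = 0"
    then have "lookup (Poly_Mapping.single t (1::'k)) t = 0" by simp
    then show False by simp
  qed
  ultimately show "t \<in> LT (monoset M :: ('n, 'k) mpoly set)" unfolding LT_def using m by force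
qed

end

theorem mainTheorem8:
  fixes ord :: "('n::finite \<Rightarrow>\<^sub>0 nat) \<Rightarrow> ('n \<Rightarrow>\<^sub>0 nat) \<Rightarrow> bool"
    and J :: "('n, 'k::field) mpoly set"
    and \<Lambda> :: "'i set"
    and E :: "'i \<Rightarrow> ('n, 'k) mpoly set"
  assumes "monomial_order ord"
    and "is_ideal J"
    and "\<And>i. i \<in> \<Lambda> \<Longrightarrow> monomial_ideal (E i)"
    and "\<And>i. i \<in> \<Lambda> \<Longrightarrow> G_nice ord J (E i)"
  shows "G_nice ord J (ideal_Sum \<Lambda> E)"
proof -
  interpret mo ord using assms(1) by unfold_locales
  have J: "is_ideal J" by fact
  define Mi where "Mi i = (SOME M. E i = ideal_gen (monom ` M))" for i
  have Ei: "E i = monoset (Mi i)" if "i \<in> \<Lambda>" for i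
  proof -
    have "\<exists>M. E i = ideal_gen (monom ` M)" using assms(3)[OF that] unfolding monomial_ideal_def .
    then have "E i = ideal_gen (monom ` Mi i)" unfolding Mi_def by (rule someI_ex)
    then show ?thesis by (simp add: ideal_gen_monom)
  qed
  define M where "M = (\<Union>i\<in>\<Lambda>. Mi i)"
  define ES where "ES = ideal_Sum \<Lambda> E"
  have ES: "ES = monoset M"
  proof -
    have "ES = ideal_gen (\<Union>i\<in>\<Lambda>. ideal_gen (monom ` Mi i))"
      unfolding ES_def ideal_Sum_def using Ei by (simp add: ideal_gen_monom)
    also have "\<dots> = ideal_gen (monom ` M)" unfolding ideal_gen_UN M_def by (simp add: image_UN)
    finally show ?thesis by (simp add: ideal_gen_monom)
  qed
  have ESi: "is_ideal ES" unfolding ES by (rule monoset_ideal)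
  have H: "lead_exp ord (j + e) \<in> upc (LT J) \<union> upc (Mi i)"
    if i: "i \<in> \<Lambda>" and j: "j \<in> J" and e: "e \<in> monoset (Mi i)" and ne: "j + e \<noteq> 0" for i j e
  proof -
    have Eii: "is_ideal (E i)" using Ei[OF i] monoset_ideal by simp
    have gn: "(monoset (LT (ideal_sum J (E i))) :: ('n, 'k) mpoly set) = monoset (LT J \<union> LT (E i))"
      using assms(4)[OF i] unfolding G_nice_def sum_init unfolding init_ideal_monoset by simp
    have "j + e \<in> ideal_sum J (E i)" unfolding ideal_sum_set[OF J Eii] using j e Ei[OF i] by blast
    then have "lead_exp ord (j + e) \<in> LT (ideal_sum J (E i))" unfolding LT_def using ne by blast
    then have "monom (lead_exp ord (j + e)) \<in> (monoset (LT (ideal_sum J (E i))) :: ('n, 'k) mpoly set)"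
      using upc_sup monom_in_monoset by blast
    then have "monom (lead_exp ord (j + e)) \<in> (monoset (LT J \<union> LT (E i)) :: ('n, 'k) mpoly set)"
      using gn by simp
    then have "lead_exp ord (j + e) \<in> upc (LT J \<union> LT (E i))"
      by (simp add: monom_in_monoset)
    moreover have "upc (LT (E i)) \<subseteq> upc (Mi i)" using upc_mono[OF LT_monoset] Ei[OF i] by simp
    ultimately show ?thesis unfolding upc_Un by blast
  qed
  define K where "K = ideal_sum J ES"
  have K: "K = {j + e | j e. j \<in> J \<and> e \<in> ES}" unfolding K_def by (rule ideal_sum_set[OF J ESi])
  have JK: "J \<subseteq> K" unfolding K using ideal_zero[OF ESi] by force
  have EK: "ES \<subseteq> K" unfolding K using ideal_zero[OF J] by force
  have "upc (LT K) = upc (LT J \<union> LT ES)"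
  proof
    show "upc (LT K) \<subseteq> upc (LT J \<union> LT ES)"
    proof (rule upc_mono, rule subsetI)
      fix t assume "t \<in> LT K"
      then obtain f where "f \<in> K" "f \<noteq> 0" "t = lead_exp ord f" unfolding LT_def by blast
      then obtain j e where "j \<in> J" "e \<in> ES" "f = j + e" unfolding K by blast
      then have "e \<in> monoset M" using ES by simp
      have "lead_exp ord (j + e) \<in> upc (LT J) \<union> upc (\<Union>i\<in>\<Lambda>. Mi i)"
        by (rule main_lead[OF J H]) (use \<open>j \<in> J\<close> \<open>e \<in> monoset M\<close> \<open>f \<noteq> 0\<close> \<open>f = j + e\<close> M_def in auto)
      then have "t \<in> upc (LT J) \<union> upc M"
        using \<open>f = j + e\<close> \<open>t = lead_exp ord f\<close> unfolding M_def by simp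
      moreover have "upc M \<subseteq> upc (LT ES)"
        unfolding ES by (rule upc_mono[OF subset_trans[OF monoset_LT upc_sup]])
      ultimately show "t \<in> upc (LT J \<union> LT ES)" unfolding upc_Un by blast
    qed
    show "upc (LT J \<union> LT ES) \<subseteq> upc (LT K)"
    proof (rule upc_mono)
      have "LT J \<union> LT ES \<subseteq> LT K" using LT_mono[OF JK] LT_mono[OF EK] by blast
      then show "LT J \<union> LT ES \<subseteq> upc (LT K)" using upc_sup by (rule subset_trans)
    qed
  qed
  then have "init_ideal ord K = ideal_sum (init_ideal ord J) (init_ideal ord ES)"
    unfolding sum_init unfolding init_ideal_monoset by (rule monoset_eq)
  then show ?thesis unfolding G_nice_def K_def ES_def .
qed


end
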